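(* Let $k\ge2$, $0\le\alpha<1$, and let $G$ be a connected $k$-uniform hypergraph. Let $r\ge1$, let $u,v_1,\dots,v_r\in V(G)$ (the $v_i$ not necessarily distinct) and let $e_1,\dots,e_r$ be pairwise distinct edges of $G$ with $u\notin e_i$ and $v_i\in e_i$ for $i=1,\dots,r$. Let $e_i'=(e_i\setminus\{v_i\})\cup\{u\}$, and suppose that $e_1',\dots,e_r'$ are pairwise distinct and $e_i'\notin E(G)$ for all $i$. Let $G'$ be the hypergraph obtained from $G$ by deleting the edges $e_1,\dots,e_r$ and adding the edges $e_1',\dots,e_r'$. Let $x$ be the $\alpha$-Perron vector of $G$. If $x_u\ge\max\{x_{v_1},\dots,x_{v_r}\}$, then $\rho_\alpha(G')>\rho_\alpha(G)$.
   Context: Hypergraphs are finite with edges being sets; $k$-uniform means every edge has $k$ vertices; $d_v$ is the number of edges containing $v$. $\mathcal A(G)$ is the order-$k$ dimension-$n$ tensor with $(i_1,\dots,i_k)$-entry $\frac1{(k-1)!}$ if $\{i_1,\dots,i_k\}\in E(G)$, $0$ otherwise; $\mathcal D(G)$ is the diagonal tensor of degrees; $\mathcal A_\alpha(G)=\alpha\mathcal D(G)+(1-\alpha)\mathcal A(G)$. For an order-$k$ tensor $\mathcal T$, $(\mathcal Tx)_i=\sum_{i_2,\dots,i_k}\mathcal T_{ii_2\dots i_k}x_{i_2}\cdots x_{i_k}$; $\lambda$ is an eigenvalue if $\mathcal Tx=\lambda x^{[k-1]}$ for some $x\ne0$, $x^{[k-1]}=(x_i^{k-1})_i$. $\rho_\alpha(G)$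 is the largest modulus of an eigenvalue of $\mathcal A_\alpha(G)$. A path is an alternating sequence of distinct vertices and distinct edges $(v_0,e_1,\dots,e_s,v_s)$ with $v_{i-1},v_i\in e_i$; connected means any two vertices are joined by a path. For connected $G$, the $\alpha$-Perron vector is the unique entrywise positive $x$ with $\sum_i x_i^k=1$ and $\mathcal A_\alpha(G)x=\rho_\alpha(G)x^{[k-1]}$. *)

theory Defs
  imports Complex_Main
begin

definition k_uniform :: "nat \<Rightarrow> 'a set \<Rightarrow> 'a set set \<Rightarrow> bool" where
  "k_uniform k V E \<longleftrightarrow> finite V \<and> (\<forall>e\<in>E. e \<subseteq> V \<and> card e = k)"

definition hpath :: "'a set set \<Rightarrow> 'a list \<Rightarrow> 'a set list \<Rightarrow> bool" where
  "hpath E vs es \<longleftrightarrow> vs \<noteq> [] \<and> length es + 1 = length vs \<and> distinct vs \<and> distinct es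
     \<and> set es \<subseteq> E \<and> (\<forall>i<length es. vs ! i \<in> es ! i \<and> vs ! (Suc i) \<in> es ! i)"

definition hconnected :: "'a set \<Rightarrow> 'a set set \<Rightarrow> bool" where
  "hconnected V E \<longleftrightarrow> (\<forall>u\<in>V. \<forall>w\<in>V. \<exists>vs es. hpath E vs es \<and> hd vs = u \<and> last vs = w)"

definition hdegree :: "'a set set \<Rightarrow> 'a \<Rightarrow> nat" where
  "hdegree E v = card {e\<in>E. v \<in> e}"

text \<open>Order-k tensors with index set V are functions on index lists of length k.\<close>

definition adj_tensor :: "nat \<Rightarrow> 'a set set \<Rightarrow> 'a list \<Rightarrow> real" where
  "adj_tensor k E is = (if set is \<in> E then 1 / fact (k - 1) else 0)"

definition deg_tensor :: "'a set set \<Rightarrow> 'a list \<Rightarrow> real" where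
  "deg_tensor E is = (if is \<noteq> [] \<and> (\<forall>j\<in>set is. j = hd is) then real (hdegree E (hd is)) else 0)"

definition A_alpha_tensor :: "real \<Rightarrow> nat \<Rightarrow> 'a set set \<Rightarrow> 'a list \<Rightarrow> real" where
  "A_alpha_tensor \<alpha> k E is = \<alpha> * deg_tensor E is + (1 - \<alpha>) * adj_tensor k E is"

definition tensor_apply ::
  "('a list \<Rightarrow> real) \<Rightarrow> 'a set \<Rightarrow> nat \<Rightarrow> ('a \<Rightarrow> 'b::real_algebra_1) \<Rightarrow> 'a \<Rightarrow> 'b" where
  "tensor_apply T V k x i =
     (\<Sum>l\<in>{l. set l \<subseteq> V \<and> length l = k - 1}. of_real (T (i # l)) * prod_list (map x l))"

definition tensor_eigenvalue ::
  "('a list \<Rightarrow> real) \<Rightarrow> 'a set \<Rightarrow> nat \<Rightarrow> complex \<Rightarrow> bool" where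
  "tensor_eigenvalue T V k mu \<longleftrightarrow>
     (\<exists>x :: 'a \<Rightarrow> complex. (\<exists>i\<in>V. x i \<noteq> 0) \<and>
        (\<forall>i\<in>V. tensor_apply T V k x i = mu * x i ^ (k - 1)))"

definition rho_alpha :: "real \<Rightarrow> nat \<Rightarrow> 'a set \<Rightarrow> 'a set set \<Rightarrow> real" where
  "rho_alpha \<alpha> k V E = Sup {cmod mu | mu. tensor_eigenvalue (A_alpha_tensor \<alpha> k E) V k mu}"

definition alpha_perron_vector ::
  "real \<Rightarrow> nat \<Rightarrow> 'a set \<Rightarrow> 'a set set \<Rightarrow> ('a \<Rightarrow> real) \<Rightarrow> bool" where
  "alpha_perron_vector \<alpha> k V E x \<longleftrightarrow>
     (\<forall>i\<in>V. x i > 0) \<and> (\<Sum>i\<in>V. x i ^ k) = 1 \<and>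
     (\<forall>i\<in>V. tensor_apply (A_alpha_tensor \<alpha> k E) V k x i = rho_alpha \<alpha> k V E * x i ^ (k - 1))"

end

theory Submission
  imports Defs "HOL-Analysis.Analysis"
begin

definition perms :: "'a set \<Rightarrow> 'a list set" where
  "perms A = {xs. set xs = A \<and> distinct xs}"

lemma perms_alt: "finite A \<Longrightarrow> perms A = {xs. length xs = card A \<and> distinct xs \<and> set xs \<subseteq> A}"
  unfolding perms_def
proof (intro equalityI subsetI)
  fix xs assume "xs \<in> {xs. set xs = A \<and> distinct xs}"
  then show "xs \<in> {xs. length xs = card A \<and> distinct xs \<and> set xs \<subseteq> A}" by (auto simp: distinct_card)
next
  fix xs assume fA: "finite A" and xs: "xs \<in> {xs. length xs = card A \<and> distinct xs \<and> set xs \<subseteq> A}"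
  then have cs: "card (set xs) = card A" by (simp add: distinct_card)
  have "set xs = A" using card_subset_eq[OF fA _ cs] xs by auto
  then show "xs \<in> {xs. set xs = A \<and> distinct xs}" using xs by auto
qed

lemma finite_perms [simp]: "finite (perms A)"
proof (cases "finite A")
  case True
  have "finite {xs. set xs \<subseteq> A \<and> length xs = card A}" by (rule finite_lists_length_eq[OF True])
  then show ?thesis unfolding perms_alt[OF True] by (rule rev_finite_subset) auto
next
  case False
  then have "perms A = {}" unfolding perms_def by auto
  then show ?thesis by simp
qed

lemma card_perms [simp]: "finite A \<Longrightarrow> card (perms A) = fact (card A)"
  unfolding perms_alt by (simp add: card_lists_distinct_length_eq fact_prod)

definition Tf :: "real \<Rightarrow> 'a set set \<Rightarrow> nat \<Rightarrow> ('a \<Rightarrow> 'b::real_field) \<Rightarrow> 'a \<Rightarrow> 'b" where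
  "Tf \<alpha> E k z i = of_real (\<alpha> * real (hdegree E i)) * z i ^ (k-1)
      + of_real (1-\<alpha>) * (\<Sum>e\<in>{e\<in>E. i\<in>e}. prod z (e - {i}))"

lemma deg_part:
  fixes z :: "'a \<Rightarrow> 'b::real_field"
  assumes "i \<in> V" "finite V"
  shows "(\<Sum>l\<in>{l. set l \<subseteq> V \<and> length l = k - 1}. of_real (\<alpha> * deg_tensor E (i # l)) * prod_list (map z l))
    = of_real (\<alpha> * real (hdegree E i)) * z i ^ (k-1)"
proof -
  let ?L = "{l. set l \<subseteq> V \<and> length l = k - 1}"
  have "(\<Sum>l\<in>?L. of_real (\<alpha> * deg_tensor E (i # l)) * prod_list (map z l))
     = (\<Sum>l\<in>?L. if l = replicate (k-1) i then of_real (\<alpha> * real (hdegree E i)) * z i ^ (k-1) else 0)"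
  proof (rule sum.cong)
    fix l assume l: "l \<in> ?L"
    show "of_real (\<alpha> * deg_tensor E (i # l)) * prod_list (map z l) =
      (if l = replicate (k-1) i then of_real (\<alpha> * real (hdegree E i)) * z i ^ (k-1) else 0)"
    proof (cases "\<forall>j\<in>set l. j = i")
      case True
      then have "l = replicate (k-1) i" using l by (simp add: replicate_length_same[symmetric]) (metis replicate_length_same)
      then show ?thesis by (simp add: deg_tensor_def prod_list_replicate)
    next
      case False
      then show ?thesis by (auto simp: deg_tensor_def)
    qed
  qed simp
  also have "\<dots> = of_real (\<alpha> * real (hdegree E i)) * z i ^ (k-1)"
    using assms by (subst sum.delta[OF finite_lists_length_eq]) (auto simp del: of_real_mult)
  finally show ?thesis .
qed

lemma adj_part:
  fixes z :: "'a \<Rightarrow> 'b::real_field"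
  assumes "i \<in> V" "k_uniform k V E" "k \<ge> 1"
  shows "(\<Sum>l\<in>{l. set l \<subseteq> V \<and> length l = k - 1}. of_real (adj_tensor k E (i # l)) * prod_list (map z l))
    = (\<Sum>e\<in>{e\<in>E. i\<in>e}. prod z (e - {i}))"
proof -
  have fV: "finite V" and EV: "\<And>e. e \<in> E \<Longrightarrow> e \<subseteq> V \<and> card e = k" using assms(2) by (auto simp: k_uniform_def)
  have fE: "finite E" by (rule finite_subset[of E "Pow V"]) (use fV EV in auto)
  let ?L = "{l. set l \<subseteq> V \<and> length l = k - 1}"
  let ?L' = "{l\<in>?L. set (i # l) \<in> E}"
  let ?c = "of_real (1 / fact (k-1)) :: 'b"
  have "(\<Sum>l\<in>?L. of_real (adj_tensor k E (i # l)) * prod_list (map z l))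
     = (\<Sum>l\<in>?L'. ?c * prod_list (map z l))"
    by (rule sum.mono_neutral_cong_right) (auto simp: adj_tensor_def finite_lists_length_eq fV)
  also have "?L' = (\<Union>e\<in>{e\<in>E. i\<in>e}. perms (e - {i}))"
  proof (intro equalityI subsetI)
    fix l assume l: "l \<in> ?L'"
    let ?e = "set (i # l)"
    have eE: "?e \<in> E" using l by auto
    have ck: "card ?e = k" using EV[OF eE] by blast
    have cl: "card (set l) \<le> length l" by (rule card_length)
    have A: "card (set l) = length l" and B: "i \<notin> set l" using ck l assms(3) cl
      by (auto simp: card_insert_if split: if_splits)
    have "distinct l" using A by (simp add: card_distinct)
    then have "l \<in> perms (?e - {i})" using B by (auto simp: perms_def)
    then show "l \<in> (\<Union>e\<in>{e\<in>E. i\<in>e}. perms (e - {i}))" using eE by auto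
  next
    fix l assume "l \<in> (\<Union>e\<in>{e\<in>E. i\<in>e}. perms (e - {i}))"
    then obtain e where e: "e \<in> E" "i \<in> e" and l: "set l = e - {i}" "distinct l"
      by (auto simp: perms_def)
    have "length l = card (e - {i})" using l by (metis distinct_card)
    also have "\<dots> = k - 1" using EV[OF e(1)] e(2) by simp
    finally show "l \<in> ?L'" using l e EV[OF e(1)] by (auto simp: insert_absorb)
  qed
  also have "(\<Sum>l\<in>(\<Union>e\<in>{e\<in>E. i\<in>e}. perms (e - {i})). ?c * prod_list (map z l))
      = (\<Sum>e\<in>{e\<in>E. i\<in>e}. \<Sum>l\<in>perms (e - {i}). ?c * prod_list (map z l))"
  proof (rule sum.UNION_disjoint)
    show "finite {e \<in> E. i \<in> e}" using fE by simp
    show "\<forall>e\<in>{e \<in> E. i \<in> e}. finite (perms (e - {i}))" by simp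
    show "\<forall>e\<in>{e \<in> E. i \<in> e}. \<forall>e'\<in>{e \<in> E. i \<in> e}. e \<noteq> e' \<longrightarrow>
        perms (e - {i}) \<inter> perms (e' - {i}) = {}"
    proof (intro ballI impI)
      fix e e' assume "e \<in> {e \<in> E. i \<in> e}" "e' \<in> {e \<in> E. i \<in> e}" "e \<noteq> e'"
      then have "e - {i} \<noteq> e' - {i}" by (metis (no_types, lifting) insert_Diff mem_Collect_eq)
      then show "perms (e - {i}) \<inter> perms (e' - {i}) = {}"
        unfolding perms_def by blast
    qed
  qed
  also have "\<dots> = (\<Sum>e\<in>{e\<in>E. i\<in>e}. prod z (e - {i}))"
  proof (rule sum.cong)
    fix e assume e: "e \<in> {e\<in>E. i\<in>e}"
    have fe: "finite (e - {i})" using EV e fV finite_subset by blast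
    have ce: "card (e - {i}) = k - 1" using EV e by auto
    have "(\<Sum>l\<in>perms (e - {i}). ?c * prod_list (map z l))
        = (\<Sum>l\<in>perms (e - {i}). ?c * prod z (e - {i}))"
      by (rule sum.cong) (auto simp: perms_def prod.distinct_set_conv_list[symmetric])
    also have "\<dots> = of_nat (fact (k-1)) * ?c * prod z (e - {i})"
      using fe ce by (simp add: mult.assoc)
    also have "\<dots> = prod z (e - {i})"
    proof -
      have "(of_nat (fact (k-1)) :: 'b) = of_real (fact (k-1))"
        by (metis of_real_of_nat_eq of_nat_fact)
      then have "(of_nat (fact (k-1)) :: 'b) * ?c = of_real (fact (k-1) * (1 / fact (k-1)))"
        by (simp only: of_real_mult)
      also have "\<dots> = 1" by simp
      finally show ?thesis by simp
    qed
    finally show "(\<Sum>l\<in>perms (e - {i}). ?c * prod_list (map z l)) = prod z (e - {i})" .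
  qed simp
  finally show ?thesis .
qed

lemma tensor_formula:
  fixes z :: "'a \<Rightarrow> 'b::real_field"
  assumes "i \<in> V" "k_uniform k V E" "k \<ge> 1"
  shows "tensor_apply (A_alpha_tensor \<alpha> k E) V k z i = Tf \<alpha> E k z i"
proof -
  have fV: "finite V" using assms(2) by (auto simp: k_uniform_def)
  let ?L = "{l. set l \<subseteq> V \<and> length l = k - 1}"
  have "tensor_apply (A_alpha_tensor \<alpha> k E) V k z i
    = (\<Sum>l\<in>?L. of_real (\<alpha> * deg_tensor E (i # l)) * prod_list (map z l)
         + of_real (1-\<alpha>) * (of_real (adj_tensor k E (i # l)) * prod_list (map z l)))"
    unfolding tensor_apply_def A_alpha_tensor_def
    by (rule sum.cong) (simp_all add: algebra_simps)
  also have "\<dots> = Tf \<alpha> E k z i"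
    by (simp only: sum.distrib sum_distrib_left[symmetric] deg_part[OF assms(1) fV]
        adj_part[OF assms] Tf_def)
  finally show ?thesis .
qed

lemma Tf_of_real:
  "Tf \<alpha> E k (\<lambda>i. of_real (y i) :: 'b::real_field) j = of_real (Tf \<alpha> E k y j)"
  by (simp add: Tf_def of_real_sum of_real_prod)

lemma norm_prod_list_le:
  fixes x :: "'a \<Rightarrow> complex"
  assumes "set l \<subseteq> V" "\<forall>i\<in>V. cmod (x i) \<le> m"
  shows "cmod (prod_list (map x l)) \<le> m ^ length l"
  using assms
proof (induction l)
  case Nil then show ?case by simp
next
  case (Cons a l)
  have "0 \<le> m" using Cons.prems by (meson norm_ge_zero order_trans list.set_intros(1) subsetD)
  then have "cmod (x a) * cmod (prod_list (map x l)) \<le> m * m ^ length l"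
    using Cons by (intro mult_mono) auto
  then show ?case by (simp add: norm_mult)
qed

lemma bdd_eig:
  assumes "finite V"
  shows "bdd_above {cmod mu | mu. tensor_eigenvalue T V k mu}"
proof -
  let ?L = "{l. set l \<subseteq> V \<and> length l = k - 1}"
  have fL: "finite ?L" using assms by (simp add: finite_lists_length_eq)
  let ?C = "\<Sum>i\<in>V. \<Sum>l\<in>?L. \<bar>T (i # l)\<bar>"
  show ?thesis unfolding bdd_above_def
  proof (intro exI allI impI ballI)
    fix c assume "c \<in> {cmod mu | mu. tensor_eigenvalue T V k mu}"
    then obtain mu x where c: "c = cmod mu" and nz: "\<exists>i\<in>V. x i \<noteq> 0"
      and eq: "\<forall>i\<in>V. tensor_apply T V k x i = mu * x i ^ (k - 1)"
      by (auto simp: tensor_eigenvalue_def)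
    define m where "m = Max ((\<lambda>i. cmod (x i)) ` V)"
    have Vne: "V \<noteq> {}" using nz by auto
    have "m \<in> (\<lambda>i. cmod (x i)) ` V" unfolding m_def using assms Vne by (intro Max_in) auto
    then obtain i0 where i0: "i0 \<in> V" "cmod (x i0) = m" by auto
    have mge: "\<forall>i\<in>V. cmod (x i) \<le> m" unfolding m_def using assms by auto
    obtain i1 where "i1 \<in> V" "x i1 \<noteq> 0" using nz by auto
    then have mpos: "m > 0" using mge by (meson less_le_trans zero_less_norm_iff)
    have "cmod mu * m ^ (k-1) = cmod (tensor_apply T V k x i0)"
      using eq i0 by (simp add: norm_mult norm_power)
    also have "\<dots> \<le> (\<Sum>l\<in>?L. cmod (of_real (T (i0 # l)) * prod_list (map x l)))"
      unfolding tensor_apply_def by (rule norm_sum)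
    also have "\<dots> \<le> (\<Sum>l\<in>?L. \<bar>T (i0 # l)\<bar> * m ^ (k-1))"
    proof (rule sum_mono)
      fix l assume l: "l \<in> ?L"
      have "cmod (prod_list (map x l)) \<le> m ^ length l" using norm_prod_list_le[of l V x m] l mge by auto
      then show "cmod (of_real (T (i0 # l)) * prod_list (map x l)) \<le> \<bar>T (i0 # l)\<bar> * m ^ (k-1)"
        using l by (simp add: norm_mult mult_left_mono)
    qed
    also have "\<dots> = (\<Sum>l\<in>?L. \<bar>T (i0 # l)\<bar>) * m ^ (k-1)" by (simp add: sum_distrib_right)
    finally have "cmod mu \<le> (\<Sum>l\<in>?L. \<bar>T (i0 # l)\<bar>)" using mpos by simp
    also have "\<dots> \<le> ?C"
      using i0(1) assms by (intro member_le_sum) (auto intro: sum_nonneg)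
    finally show "c \<le> ?C" using c by simp
  qed
qed

lemma rho_ge:
  assumes "k_uniform k V E" "k \<ge> 1" "\<exists>i\<in>V. y i \<noteq> 0"
    and "\<forall>j\<in>V. Tf \<alpha> E k y j = M * y j ^ (k-1)"
  shows "M \<le> rho_alpha \<alpha> k V E"
proof -
  have fV: "finite V" using assms(1) by (auto simp: k_uniform_def)
  have "tensor_eigenvalue (A_alpha_tensor \<alpha> k E) V k (complex_of_real M)"
    unfolding tensor_eigenvalue_def
  proof (intro exI conjI)
    show "\<exists>i\<in>V. complex_of_real (y i) \<noteq> 0" using assms(3) by auto
    show "\<forall>i\<in>V. tensor_apply (A_alpha_tensor \<alpha> k E) V k (\<lambda>i. complex_of_real (y i)) i =
          complex_of_real M * complex_of_real (y i) ^ (k - 1)"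
      using assms(4) by (simp add: tensor_formula[OF _ assms(1,2)] Tf_of_real)
  qed
  then have "cmod (complex_of_real M) \<in> {cmod mu | mu. tensor_eigenvalue (A_alpha_tensor \<alpha> k E) V k mu}"
    by blast
  then have "cmod (complex_of_real M) \<le> rho_alpha \<alpha> k V E"
    unfolding rho_alpha_def by (rule cSup_upper[OF _ bdd_eig[OF fV]])
  then show ?thesis by simp
qed


definition Qf :: "real \<Rightarrow> 'a set set \<Rightarrow> nat \<Rightarrow> ('a \<Rightarrow> real) \<Rightarrow> real" where
  "Qf \<alpha> E k z = (\<Sum>e\<in>E. \<alpha> * (\<Sum>i\<in>e. z i ^ k) + (1-\<alpha>) * real k * prod z e)"

lemma kuE:
  assumes "k_uniform k V E"
  shows "finite V" "finite E" "\<And>e. e \<in> E \<Longrightarrow> e \<subseteq> V" "\<And>e. e \<in> E \<Longrightarrow> card e = k"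
    "\<And>e. e \<in> E \<Longrightarrow> finite e"
proof -
  show fV: "finite V" using assms by (auto simp: k_uniform_def)
  show EV: "\<And>e. e \<in> E \<Longrightarrow> e \<subseteq> V" "\<And>e. e \<in> E \<Longrightarrow> card e = k" using assms by (auto simp: k_uniform_def)
  show "finite E" by (rule finite_subset[of E "Pow V"]) (use fV EV in auto)
  show "\<And>e. e \<in> E \<Longrightarrow> finite e" using fV EV finite_subset by blast
qed

lemma swap_sum:
  fixes f :: "'a \<Rightarrow> 'a set \<Rightarrow> real"
  assumes "finite V" "finite E" "\<And>e. e \<in> E \<Longrightarrow> e \<subseteq> V"
  shows "(\<Sum>i\<in>V. \<Sum>e\<in>{e\<in>E. i\<in>e}. f i e) = (\<Sum>e\<in>E. \<Sum>i\<in>e. f i e)"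
proof -
  have "(\<Sum>i\<in>V. \<Sum>e\<in>{e\<in>E. i\<in>e}. f i e) = (\<Sum>i\<in>V. \<Sum>e\<in>E. if i \<in> e then f i e else 0)"
    using assms by (simp add: sum.inter_filter)
  also have "\<dots> = (\<Sum>e\<in>E. \<Sum>i\<in>V. if i \<in> e then f i e else 0)" by (rule sum.swap)
  also have "\<dots> = (\<Sum>e\<in>E. \<Sum>i\<in>{i\<in>V. i \<in> e}. f i e)"
    using assms by (simp add: sum.inter_filter)
  also have "\<dots> = (\<Sum>e\<in>E. \<Sum>i\<in>e. f i e)"
    using assms(3) by (intro sum.cong refl) (metis (mono_tags, lifting) Collect_cong Collect_mem_eq subset_iff)
  finally show ?thesis .
qed

lemma Q_eq:
  assumes "k_uniform k V E" "k \<ge> 1"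
  shows "(\<Sum>i\<in>V. z i * Tf \<alpha> E k z i) = Qf \<alpha> E k z"
proof -
  note K = kuE[OF assms(1)]
  have "(\<Sum>i\<in>V. z i * Tf \<alpha> E k z i) =
     (\<Sum>i\<in>V. \<Sum>e\<in>{e\<in>E. i\<in>e}. \<alpha> * z i ^ k + (1-\<alpha>) * prod z e)"
  proof (rule sum.cong)
    fix i assume "i \<in> V"
    have zz: "z i * z i ^ (k-1) = z i ^ k" using assms(2)
      by (metis One_nat_def Suc_pred le_simps(3) power_Suc zero_less_diff)
    have pr: "\<And>e. e \<in> {e\<in>E. i\<in>e} \<Longrightarrow> z i * prod z (e - {i}) = prod z e"
      using K(5) by (auto simp: prod.remove)
    have "z i * Tf \<alpha> E k z i = \<alpha> * real (hdegree E i) * (z i * z i ^ (k-1))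
        + (1-\<alpha>) * (\<Sum>e\<in>{e\<in>E. i\<in>e}. z i * prod z (e - {i}))"
      unfolding Tf_def by (simp add: algebra_simps sum_distrib_left)
    also have "\<dots> = \<alpha> * real (hdegree E i) * z i ^ k + (1-\<alpha>) * (\<Sum>e\<in>{e\<in>E. i\<in>e}. prod z e)"
      using pr zz by simp
    also have "\<dots> = (\<Sum>e\<in>{e\<in>E. i\<in>e}. \<alpha> * z i ^ k + (1-\<alpha>) * prod z e)"
      by (simp add: sum.distrib sum_distrib_left hdegree_def)
    finally show "z i * Tf \<alpha> E k z i = (\<Sum>e\<in>{e\<in>E. i\<in>e}. \<alpha> * z i ^ k + (1-\<alpha>) * prod z e)" .
  qed simp
  also have "\<dots> = (\<Sum>e\<in>E. \<Sum>i\<in>e. \<alpha> * z i ^ k + (1-\<alpha>) * prod z e)"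
    by (rule swap_sum[OF K(1,2,3)])
  also have "\<dots> = Qf \<alpha> E k z"
    unfolding Qf_def using K(4) by (intro sum.cong refl) (simp add: sum.distrib sum_distrib_left)
  finally show ?thesis .
qed

lemma Q_homog:
  assumes "k_uniform k V E"
  shows "Qf \<alpha> E k (\<lambda>i. c * z i) = c ^ k * Qf \<alpha> E k z"
  unfolding Qf_def using kuE(4)[OF assms]
  by (simp add: sum_distrib_left power_mult_distrib prod.distrib algebra_simps)

lemma Q_V:
  assumes "k_uniform k V E" "\<forall>i\<in>V. z i = w i"
  shows "Qf \<alpha> E k z = Qf \<alpha> E k w"
  unfolding Qf_def
proof (rule sum.cong[OF refl])
  fix e assume "e \<in> E"
  then have h: "\<And>i. i \<in> e \<Longrightarrow> z i = w i" using kuE(3)[OF assms(1)] assms(2) by blast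
  have "(\<Sum>i\<in>e. z i ^ k) = (\<Sum>i\<in>e. w i ^ k)" by (rule sum.cong) (auto simp: h)
  moreover have "prod z e = prod w e" by (rule prod.cong) (auto simp: h)
  ultimately show "\<alpha> * (\<Sum>i\<in>e. z i ^ k) + (1 - \<alpha>) * real k * prod z e =
         \<alpha> * (\<Sum>i\<in>e. w i ^ k) + (1 - \<alpha>) * real k * prod w e" by simp
qed

lemma Q_pert:
  assumes "k_uniform k V E"
  shows "Qf \<alpha> E k (z(j := z j + t)) = Qf \<alpha> E k z + \<alpha> * real (hdegree E j) * ((z j + t)^k - z j ^ k)
     + (1-\<alpha>) * real k * t * (\<Sum>e\<in>{e\<in>E. j\<in>e}. prod z (e - {j}))"
proof -
  note K = kuE[OF assms(1)]
  let ?w = "z(j := z j + t)"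
  have edge: "\<alpha> * (\<Sum>i\<in>e. ?w i ^ k) + (1-\<alpha>) * real k * prod ?w e
     = \<alpha> * (\<Sum>i\<in>e. z i ^ k) + (1-\<alpha>) * real k * prod z e
       + (if j \<in> e then \<alpha> * ((z j + t)^k - z j ^ k) + (1-\<alpha>) * real k * t * prod z (e - {j}) else 0)"
    if e: "e \<in> E" for e
  proof (cases "j \<in> e")
    case True
    have fe: "finite e" using K(5)[OF e] .
    have s1: "(\<Sum>i\<in>e. ?w i ^ k) = (z j + t)^k + (\<Sum>i\<in>e - {j}. z i ^ k)"
      using True fe by (simp add: sum.remove)
    have s2: "(\<Sum>i\<in>e. z i ^ k) = z j ^k + (\<Sum>i\<in>e - {j}. z i ^ k)"
      using True fe by (simp add: sum.remove)
    have p1: "prod ?w e = (z j + t) * prod z (e - {j})"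
      using True fe by (simp add: prod.remove)
    have p2: "prod z e = z j * prod z (e - {j})"
      using True fe by (simp add: prod.remove)
    show ?thesis using True unfolding s1 s2 p1 p2 by (simp add: algebra_simps)
  next
    case False
    then have "(\<Sum>i\<in>e. ?w i ^ k) = (\<Sum>i\<in>e. z i ^ k)" "prod ?w e = prod z e"
      by (auto intro!: sum.cong prod.cong)
    then show ?thesis using False by simp
  qed
  have "Qf \<alpha> E k ?w = Qf \<alpha> E k z + (\<Sum>e\<in>E. if j \<in> e then \<alpha> * ((z j + t)^k - z j ^ k) + (1-\<alpha>) * real k * t * prod z (e - {j}) else 0)"
  proof -
    have "Qf \<alpha> E k ?w = (\<Sum>e\<in>E. (\<alpha> * (\<Sum>i\<in>e. z i ^ k) + (1-\<alpha>) * real k * prod z e)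
       + (if j \<in> e then \<alpha> * ((z j + t)^k - z j ^ k) + (1-\<alpha>) * real k * t * prod z (e - {j}) else 0))"
      unfolding Qf_def by (rule sum.cong[OF refl]) (rule edge)
    then show ?thesis by (simp only: sum.distrib Qf_def)
  qed
  also have "(\<Sum>e\<in>E. if j \<in> e then \<alpha> * ((z j + t)^k - z j ^ k) + (1-\<alpha>) * real k * t * prod z (e - {j}) else 0)
     = (\<Sum>e\<in>{e\<in>E. j\<in>e}. \<alpha> * ((z j + t)^k - z j ^ k) + (1-\<alpha>) * real k * t * prod z (e - {j}))"
    using K(2) by (simp add: sum.inter_filter)
  also have "\<dots> = \<alpha> * real (hdegree E j) * ((z j + t)^k - z j ^ k)
     + (1-\<alpha>) * real k * t * (\<Sum>e\<in>{e\<in>E. j\<in>e}. prod z (e - {j}))"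
    by (simp add: sum.distrib sum_distrib_left hdegree_def)
  finally show ?thesis by (simp only: add.assoc)
qed


lemma calc_lemma:
  fixes a c B :: real and k :: nat
  assumes "a \<ge> 0" "k \<ge> 2" "B \<ge> 0"
    and H: "\<And>t. t \<ge> -a \<Longrightarrow> c * ((a + t)^k - a^k) - B * t \<ge> 0"
  shows "B = real k * c * a ^ (k-1)"
proof (cases "a > 0")
  case True
  let ?f = "\<lambda>t. c * ((a + t)^k - a^k) - B * t"
  have D: "(?f has_real_derivative (c * (real k * (a + 0) ^ (k-1)) - B)) (at 0)"
    by (auto intro!: derivative_eq_intros)
  have "c * (real k * (a + 0) ^ (k-1)) - B = 0"
  proof (rule DERIV_local_min[OF D True])
    show "\<forall>y. \<bar>0 - y\<bar> < a \<longrightarrow> ?f 0 \<le> ?f y"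
    proof (intro allI impI)
      fix y assume "\<bar>0 - y\<bar> < a"
      then have "y \<ge> -a" by auto
      then show "?f 0 \<le> ?f y" using H by simp
    qed
  qed
  then show ?thesis by (simp add: algebra_simps)
next
  case False
  then have a0: "a = 0" using assms(1) by simp
  have "B = 0"
  proof (rule ccontr)
    assume "B \<noteq> 0"
    then have Bp: "B > 0" using assms(3) by simp
    define t where "t = min 1 (B / (\<bar>c\<bar> + 1))"
    have tp: "t > 0" using Bp by (simp add: t_def)
    have t1: "t \<le> 1" by (simp add: t_def)
    have z0: "(0::real) ^ k = 0" using assms(2) by simp
    have "c * t ^ k - B * t \<ge> 0" using H[of t] tp a0 z0 by simp
    then have "B * t \<le> c * t ^ k" by simp
    also have "c * t ^ k \<le> \<bar>c\<bar> * t ^ k" by (simp add: abs_ge_self mult_right_mono tp less_imp_le)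
    also have "t ^ k = t * t * t ^ (k-2)" using assms(2)
      by (metis add_2_eq_Suc le_add_diff_inverse mult.assoc power_Suc power_add power_one_right add.commute)
    also have "t ^ (k-2) \<le> 1" using tp t1 by (simp add: power_le_one)
    then have "\<bar>c\<bar> * (t * t * t ^ (k-2)) \<le> \<bar>c\<bar> * (t * t)"
      using tp by (simp add: mult_left_mono)
    finally have "B * t \<le> \<bar>c\<bar> * t * t" by (simp add: mult.assoc)
    then have "B \<le> \<bar>c\<bar> * t" using tp by simp
    also have "\<bar>c\<bar> * t \<le> \<bar>c\<bar> * (B / (\<bar>c\<bar> + 1))"
      by (rule mult_left_mono) (auto simp: t_def)
    also have "\<dots> < B" using Bp by (simp add: field_simps)
    finally show False by simp
  qed
  then show ?thesis using a0 assms(2) by simp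
qed


definition Sset :: "'a set \<Rightarrow> nat \<Rightarrow> ('a \<Rightarrow> real) set" where
  "Sset V k = {z. (\<forall>i. i \<notin> V \<longrightarrow> z i = 0) \<and> (\<forall>i\<in>V. 0 \<le> z i) \<and> (\<Sum>i\<in>V. z i ^ k) = 1}"

lemma Q_bound:
  assumes ku: "k_uniform k V E" and k: "k \<ge> 1" and y: "y \<in> Sset V k"
    and mx: "\<forall>z\<in>Sset V k. Qf \<alpha> E k z \<le> Qf \<alpha> E k y"
    and w: "\<forall>i\<in>V. 0 \<le> w i"
  shows "Qf \<alpha> E k w \<le> Qf \<alpha> E k y * (\<Sum>i\<in>V. w i ^ k)"
proof -
  note K = kuE[OF ku]
  define w' where "w' = (\<lambda>i. if i \<in> V then w i else 0)"
  have Qw: "Qf \<alpha> E k w = Qf \<alpha> E k w'" by (rule Q_V[OF ku]) (simp add: w'_def)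
  have sw: "(\<Sum>i\<in>V. w i ^ k) = (\<Sum>i\<in>V. w' i ^ k)" by (simp add: w'_def)
  define s where "s = (\<Sum>i\<in>V. w' i ^ k)"
  have w'nn: "\<forall>i. 0 \<le> w' i" using w by (simp add: w'_def)
  have s0: "s \<ge> 0" unfolding s_def using w'nn by (simp add: sum_nonneg)
  show ?thesis
  proof (cases "s = 0")
    case True
    then have "\<forall>i\<in>V. w' i ^ k = 0" unfolding s_def using K(1) w'nn
      by (subst (asm) sum_nonneg_eq_0_iff) auto
    then have "\<forall>i. w' i = 0" using k by (auto simp: w'_def)
    have h: "Qf \<alpha> E k (\<lambda>i. 0 * w' i) = 0^k * Qf \<alpha> E k w'" by (rule Q_homog[OF ku])
    have "(\<lambda>i. 0 * w' i) = w'" using \<open>\<forall>i. w' i = 0\<close> by auto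
    have z0: "(0::real)^k = 0" using k by simp
    have "Qf \<alpha> E k (\<lambda>i. 0 * w' i) = 0" using h z0 by simp
    then have "Qf \<alpha> E k w' = 0" by (simp only: \<open>(\<lambda>i. 0 * w' i) = w'\<close>)
    then show ?thesis using Qw sw True s_def by simp
  next
    case False
    then have sp: "s > 0" using s0 by simp
    define c where "c = root k s"
    have cp: "c > 0" using sp k by (simp add: c_def)
    have ck: "c ^ k = s" using sp k by (simp add: c_def)
    define z where "z = (\<lambda>i. (1/c) * w' i)"
    have "(\<Sum>i\<in>V. z i ^ k) = (\<Sum>i\<in>V. w' i ^ k) / c ^ k"
      by (simp add: z_def power_mult_distrib power_divide sum_divide_distrib)
    also have "\<dots> = 1" using ck sp s_def by simp
    finally have "z \<in> Sset V k" unfolding Sset_def z_def using w'nn cp w by (auto simp: w'_def)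
    then have "Qf \<alpha> E k z \<le> Qf \<alpha> E k y" using mx by blast
    moreover have "Qf \<alpha> E k z = Qf \<alpha> E k w' / s"
      unfolding z_def Q_homog[OF ku] using ck by (simp add: power_divide)
    ultimately have "Qf \<alpha> E k w' \<le> Qf \<alpha> E k y * s" using sp by (simp add: divide_le_eq)
    then show ?thesis using Qw sw s_def by simp
  qed
qed

lemma sum_upd:
  fixes y :: "'a \<Rightarrow> real"
  assumes "finite V" "j \<in> V"
  shows "(\<Sum>i\<in>V. (y(j := b)) i ^ k) = (\<Sum>i\<in>V. y i ^ k) + (b ^ k - y j ^ k)"
proof -
  have "(\<Sum>i\<in>V. (y(j := b)) i ^ k) = b ^ k + (\<Sum>i\<in>V - {j}. (y(j := b)) i ^ k)"
    using assms by (simp add: sum.remove)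
  moreover have "(\<Sum>i\<in>V - {j}. (y(j := b)) i ^ k) = (\<Sum>i\<in>V - {j}. y i ^ k)"
    by (rule sum.cong) auto
  moreover have "(\<Sum>i\<in>V. y i ^ k) = y j ^ k + (\<Sum>i\<in>V - {j}. y i ^ k)"
    using assms by (simp add: sum.remove)
  ultimately show ?thesis by linarith
qed

lemma lagrange:
  assumes ku: "k_uniform k V E" and k: "k \<ge> 2" and al: "\<alpha> < 1" and y: "y \<in> Sset V k"
    and mx: "\<forall>z\<in>Sset V k. Qf \<alpha> E k z \<le> Qf \<alpha> E k y"
  shows "\<forall>j\<in>V. Tf \<alpha> E k y j = Qf \<alpha> E k y * y j ^ (k-1)"
proof
  fix j assume j: "j \<in> V"
  note K = kuE[OF ku]
  define M where "M = Qf \<alpha> E k y"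
  define a where "a = y j"
  define d where "d = real (hdegree E j)"
  define P where "P = (\<Sum>e\<in>{e\<in>E. j\<in>e}. prod y (e - {j}))"
  have ynn: "\<forall>i\<in>V. 0 \<le> y i" and ys: "(\<Sum>i\<in>V. y i ^ k) = 1" using y by (auto simp: Sset_def)
  have a0: "a \<ge> 0" using ynn j a_def by simp
  have P0: "P \<ge> 0" unfolding P_def
    by (intro sum_nonneg prod_nonneg) (use K(3) ynn in blast)
  have B0: "(1-\<alpha>) * real k * P \<ge> 0" using al P0 by simp
  have H: "(M - \<alpha> * d) * ((a + t)^k - a^k) - ((1-\<alpha>) * real k * P) * t \<ge> 0" if t: "t \<ge> -a" for t
  proof -
    let ?w = "y(j := y j + t)"
    have wn: "\<forall>i\<in>V. 0 \<le> ?w i" using ynn t a_def by auto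
    have "Qf \<alpha> E k ?w \<le> M * (\<Sum>i\<in>V. ?w i ^ k)"
      unfolding M_def by (rule Q_bound[OF ku _ y mx wn]) (use k in simp)
    also have "(\<Sum>i\<in>V. ?w i ^ k) = 1 + ((a+t)^k - a^k)"
    proof -
      have "(\<Sum>i\<in>V. ?w i ^ k) = (\<Sum>i\<in>V. y i ^ k) + ((y j + t) ^ k - y j ^ k)"
        by (rule sum_upd[OF K(1) j])
      then show ?thesis using ys a_def by simp
    qed
    finally have L: "Qf \<alpha> E k ?w \<le> M * (1 + ((a+t)^k - a^k))" .
    have Qp: "Qf \<alpha> E k ?w = M + \<alpha> * d * ((a + t)^k - a^k) + (1-\<alpha>) * real k * t * P"
      unfolding M_def d_def P_def a_def by (rule Q_pert[OF ku])
    have "M + \<alpha> * d * ((a + t)^k - a^k) + (1-\<alpha>) * real k * t * P \<le> M * (1 + ((a+t)^k - a^k))"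
      using L unfolding Qp .
    then show ?thesis by (simp add: algebra_simps)
  qed
  have "(1-\<alpha>) * real k * P = real k * (M - \<alpha> * d) * a ^ (k-1)"
    by (rule calc_lemma[OF a0 k B0 H]) simp
  then have "real k * ((1-\<alpha>) * P) = real k * ((M - \<alpha> * d) * a ^ (k-1))" by (simp add: algebra_simps)
  then have "(1-\<alpha>) * P = (M - \<alpha> * d) * a ^ (k-1)" using k by simp
  then show "Tf \<alpha> E k y j = Qf \<alpha> E k y * y j ^ (k-1)"
    unfolding Tf_def M_def[symmetric] a_def[symmetric] d_def[symmetric] P_def[symmetric]
    by (simp add: algebra_simps)
qed


lemma cont_coord [continuous_intros]: "continuous_on S (\<lambda>z::'a \<Rightarrow> real. z i)"
  by (rule continuous_on_subset[OF continuous_on_product_coordinates subset_UNIV])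

lemma exists_max:
  assumes ku: "k_uniform k V E" and k: "k \<ge> 1" and Vne: "V \<noteq> {}"
  shows "\<exists>y\<in>Sset V k. \<forall>z\<in>Sset V k. Qf \<alpha> E k z \<le> Qf \<alpha> E k y"
proof -
  note K = kuE[OF ku]
  define Box :: "('a \<Rightarrow> real) set" where "Box = PiE UNIV (\<lambda>i. if i \<in> V then {0..1} else {0})"
  have "compactin (product_topology (\<lambda>_. euclidean) UNIV) Box"
    unfolding Box_def by (subst compactin_PiE) auto
  then have cB: "compact Box" by (simp add: euclidean_product_topology)
  have cl: "closed {z::'a \<Rightarrow> real. (\<Sum>i\<in>V. z i ^ k) = 1}"
    by (intro closed_Collect_eq continuous_intros)
  have eq: "Sset V k = Box \<inter> {z. (\<Sum>i\<in>V. z i ^ k) = 1}"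
  proof (intro equalityI subsetI)
    fix z assume z: "z \<in> Sset V k"
    have "\<forall>i\<in>V. z i \<le> 1"
    proof
      fix i assume i: "i \<in> V"
      have "z i ^ k \<le> (\<Sum>i\<in>V. z i ^ k)"
        by (rule member_le_sum) (use z i K(1) in \<open>auto simp: Sset_def\<close>)
      then have "z i ^ k \<le> 1" using z by (simp add: Sset_def)
      then show "z i \<le> 1" using z i k by (simp add: Sset_def power_le_one_iff)
    qed
    then show "z \<in> Box \<inter> {z. (\<Sum>i\<in>V. z i ^ k) = 1}" using z
      unfolding Box_def Sset_def by (auto simp: PiE_iff)
  next
    fix z assume "z \<in> Box \<inter> {z. (\<Sum>i\<in>V. z i ^ k) = 1}"
    then show "z \<in> Sset V k" unfolding Box_def Sset_def by (auto simp: PiE_iff split: if_splits)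
  qed
  have cS: "compact (Sset V k)" unfolding eq using cB cl by (rule compact_Int_closed)
  obtain i0 where i0: "i0 \<in> V" using Vne by auto
  have "(\<Sum>i\<in>V. (if i = i0 then 1 else 0 :: real)^k) = (\<Sum>i\<in>V. if i = i0 then 1 else 0)"
    by (rule sum.cong) (use k in auto)
  also have "\<dots> = 1" using i0 K(1) by simp
  finally have "(\<lambda>i. if i = i0 then 1 else 0 :: real) \<in> Sset V k"
    using i0 by (auto simp: Sset_def)
  then have ne: "Sset V k \<noteq> {}" by auto
  have ct: "continuous_on (Sset V k) (Qf \<alpha> E k)"
    unfolding Qf_def by (intro continuous_intros)
  show ?thesis using continuous_attains_sup[OF cS ne ct] by blast
qed


lemma Tf_V:
  fixes z w :: "'a \<Rightarrow> real"
  assumes "k_uniform k V E" "\<forall>i\<in>V. z i = w i" "j \<in> V"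
  shows "Tf \<alpha> E k z j = Tf \<alpha> E k w j"
proof -
  have h: "\<And>e. e \<in> {e\<in>E. j\<in>e} \<Longrightarrow> prod z (e - {j}) = prod w (e - {j})"
    using kuE(3)[OF assms(1)] assms(2) by (intro prod.cong) auto
  have "(\<Sum>e\<in>{e\<in>E. j\<in>e}. prod z (e - {j})) = (\<Sum>e\<in>{e\<in>E. j\<in>e}. prod w (e - {j}))"
    by (rule sum.cong) (use h in auto)
  then show ?thesis unfolding Tf_def using assms(2,3) by simp
qed

lemma edge_gain:
  fixes x :: "'a \<Rightarrow> real"
  assumes "finite S" "v \<in> S" "u \<notin> S" "0 \<le> x v" "x v \<le> x u" "\<forall>j\<in>S. 0 \<le> x j" "0 \<le> \<alpha>" "\<alpha> < 1"
  shows "\<alpha> * (\<Sum>i\<in>S. x i ^ k) + (1-\<alpha>) * real k * prod x S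
     \<le> \<alpha> * (\<Sum>i\<in>(S - {v}) \<union> {u}. x i ^ k) + (1-\<alpha>) * real k * prod x ((S - {v}) \<union> {u})"
proof -
  have f: "finite (S - {v})" using assms(1) by simp
  have un: "u \<notin> S - {v}" using assms(3) by simp
  have s1: "(\<Sum>i\<in>(S - {v}) \<union> {u}. x i ^ k) = x u ^ k + (\<Sum>i\<in>S - {v}. x i ^ k)"
    using f un by simp
  have s2: "(\<Sum>i\<in>S. x i ^ k) = x v ^ k + (\<Sum>i\<in>S - {v}. x i ^ k)"
    using assms(1,2) by (simp add: sum.remove)
  have p1: "prod x ((S - {v}) \<union> {u}) = x u * prod x (S - {v})"
    using f un by simp
  have p2: "prod x S = x v * prod x (S - {v})"
    using assms(1,2) by (simp add: prod.remove)
  have P0: "prod x (S - {v}) \<ge> 0" using assms(6) by (intro prod_nonneg) auto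
  have "x v ^ k \<le> x u ^ k" using assms(4,5) by (simp add: power_mono)
  then have A: "\<alpha> * x v ^ k \<le> \<alpha> * x u ^ k" using assms(7) by (rule mult_left_mono)
  have "x v * prod x (S - {v}) \<le> x u * prod x (S - {v})" using assms(5) P0 by (rule mult_right_mono)
  then have B: "(1-\<alpha>) * real k * (x v * prod x (S - {v})) \<le> (1-\<alpha>) * real k * (x u * prod x (S - {v}))"
    using assms(8) by (intro mult_left_mono) auto
  show ?thesis unfolding s1 s2 p1 p2 using A B by (simp add: algebra_simps)
qed


theorem theorem4p1:
  fixes V :: "'a set" and E :: "'a set set" and k r :: nat and \<alpha> :: real
    and u :: 'a and v :: "nat \<Rightarrow> 'a" and e :: "nat \<Rightarrow> 'a set" and x :: "'a \<Rightarrow> real"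
  assumes "k \<ge> 2" and "0 \<le> \<alpha>" and "\<alpha> < 1"
    and "k_uniform k V E" and "hconnected V E"
    and "r \<ge> 1" and "u \<in> V" and "\<forall>i\<in>{1..r}. v i \<in> V"
    and "\<forall>i\<in>{1..r}. e i \<in> E" and "inj_on e {1..r}"
    and "\<forall>i\<in>{1..r}. u \<notin> e i \<and> v i \<in> e i"
    and "inj_on (\<lambda>i. (e i - {v i}) \<union> {u}) {1..r}"
    and "\<forall>i\<in>{1..r}. (e i - {v i}) \<union> {u} \<notin> E"
    and "alpha_perron_vector \<alpha> k V E x"
    and "\<forall>i\<in>{1..r}. x u \<ge> x (v i)"
  shows "rho_alpha \<alpha> k V ((E - e ` {1..r}) \<union> (\<lambda>i. (e i - {v i}) \<union> {u}) ` {1..r})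
         > rho_alpha \<alpha> k V E"
proof -
  note k2 = assms(1) and a0 = assms(2) and a1 = assms(3) and ku = assms(4)
  note r1 = assms(6) and uV = assms(7) and vV = assms(8) and eE = assms(9) and einj = assms(10)
  note uv = assms(11) and finj = assms(12) and fE = assms(13) and pv = assms(14) and xuv = assms(15)
  define f where "f = (\<lambda>i. (e i - {v i}) \<union> {u})"
  define A where "A = e ` {1..r}"
  define B where "B = f ` {1..r}"
  define E' where "E' = (E - A) \<union> B"
  have k1: "k \<ge> 1" using k2 by simp
  note K = kuE[OF ku]
  define \<rho> where "\<rho> = rho_alpha \<alpha> k V E"
  define \<rho>' where "\<rho>' = rho_alpha \<alpha> k V E'"
  have goal_eq: "rho_alpha \<alpha> k V ((E - e ` {1..r}) \<union> (\<lambda>i. (e i - {v i}) \<union> {u}) ` {1..r}) = \<rho>'"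
    unfolding \<rho>'_def E'_def A_def B_def f_def ..
  have AE: "A \<subseteq> E" using eE A_def by auto
  have BE: "B \<inter> E = {}" using fE B_def f_def by auto
  have fcard: "card (f i) = k" "f i \<subseteq> V" if i: "i \<in> {1..r}" for i
  proof -
    have ei: "e i \<in> E" using eE i by auto
    have fe: "finite (e i)" using K(5)[OF ei] .
    have "card (e i - {v i}) = k - 1" using K(4)[OF ei] uv i by auto
    moreover have "u \<notin> e i - {v i}" using uv i by auto
    ultimately show "card (f i) = k" using fe k1 unfolding f_def by simp
    show "f i \<subseteq> V" using K(3)[OF ei] uV unfolding f_def by auto
  qed
  have ku': "k_uniform k V E'"
    unfolding k_uniform_def E'_def B_def using K(1,3,4) fcard by (auto; meson atLeastAtMost_iff fcard(2) subsetD)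
  note K' = kuE[OF ku']
  have xpos: "\<forall>i\<in>V. x i > 0" and xs: "(\<Sum>i\<in>V. x i ^ k) = 1"
    and xeig: "\<forall>i\<in>V. tensor_apply (A_alpha_tensor \<alpha> k E) V k x i = \<rho> * x i ^ (k - 1)"
    using pv unfolding alpha_perron_vector_def \<rho>_def by auto
  have Tx: "\<forall>i\<in>V. Tf \<alpha> E k x i = \<rho> * x i ^ (k - 1)"
  proof
    fix i assume i: "i \<in> V"
    have "tensor_apply (A_alpha_tensor \<alpha> k E) V k x i = Tf \<alpha> E k x i" by (rule tensor_formula[OF i ku k1])
    then show "Tf \<alpha> E k x i = \<rho> * x i ^ (k - 1)" using xeig i by simp
  qed
  define x0 where "x0 = (\<lambda>i. if i \<in> V then x i else 0)"
  have x0S: "x0 \<in> Sset V k" unfolding Sset_def x0_def using xpos xs by (auto simp: less_imp_le)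
  have x0V: "\<forall>i\<in>V. x0 i = x i" by (simp add: x0_def)
  have QE: "Qf \<alpha> E k x = \<rho>"
  proof -
    have "Qf \<alpha> E k x = (\<Sum>i\<in>V. x i * Tf \<alpha> E k x i)" using Q_eq[OF ku k1] by simp
    also have "\<dots> = (\<Sum>i\<in>V. \<rho> * x i ^ k)"
    proof (rule sum.cong[OF refl])
      fix i assume "i \<in> V"
      then have "x i * Tf \<alpha> E k x i = \<rho> * (x i * x i ^ (k-1))" using Tx by simp
      also have "x i * x i ^ (k-1) = x i ^ k" using k1
        by (metis One_nat_def Suc_pred le_simps(3) power_Suc zero_less_diff)
      finally show "x i * Tf \<alpha> E k x i = \<rho> * x i ^ k" .
    qed
    also have "\<dots> = \<rho>" using xs by (simp add: sum_distrib_left[symmetric])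
    finally show ?thesis .
  qed
  let ?g = "\<lambda>S. \<alpha> * (\<Sum>i\<in>S. x i ^ k) + (1-\<alpha>) * real k * prod x S"
  have QE': "Qf \<alpha> E k x \<le> Qf \<alpha> E' k x"
  proof -
    have fA: "finite A" "finite B" using A_def B_def by auto
    have "Qf \<alpha> E k x = sum ?g (E - A) + sum ?g A"
      unfolding Qf_def by (rule sum.subset_diff[OF AE K(2)])
    moreover have "Qf \<alpha> E' k x = sum ?g (E - A) + sum ?g B"
      unfolding Qf_def E'_def using K(2) fA BE by (intro sum.union_disjoint) auto
    moreover have "sum ?g A = (\<Sum>i\<in>{1..r}. ?g (e i))"
      unfolding A_def using einj by (simp add: sum.reindex)
    moreover have "sum ?g B = (\<Sum>i\<in>{1..r}. ?g (f i))"
      unfolding B_def using finj f_def by (simp add: sum.reindex)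
    moreover have "(\<Sum>i\<in>{1..r}. ?g (e i)) \<le> (\<Sum>i\<in>{1..r}. ?g (f i))"
    proof (rule sum_mono)
      fix i assume i: "i \<in> {1..r}"
      have ei: "e i \<in> E" using eE i by auto
      show "?g (e i) \<le> ?g (f i)" unfolding f_def
      proof (rule edge_gain)
        show "finite (e i)" using K(5)[OF ei] .
        show "v i \<in> e i" "u \<notin> e i" using uv i by auto
        show "0 \<le> x (v i)" using xpos vV i by (auto simp: less_imp_le)
        show "x (v i) \<le> x u" using xuv i by auto
        show "\<forall>j\<in>e i. 0 \<le> x j" using xpos K(3)[OF ei] by (auto simp: less_imp_le)
      qed (use a0 a1 in auto)
    qed
    ultimately show ?thesis by linarith
  qed
  have Vne: "V \<noteq> {}" using uV by auto
  obtain y where yS: "y \<in> Sset V k" and ymax: "\<forall>z\<in>Sset V k. Qf \<alpha> E' k z \<le> Qf \<alpha> E' k y"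
    using exists_max[OF ku' k1 Vne] by blast
  define M where "M = Qf \<alpha> E' k y"
  have ylag: "\<forall>j\<in>V. Tf \<alpha> E' k y j = M * y j ^ (k-1)"
    unfolding M_def by (rule lagrange[OF ku' k2 a1 yS ymax])
  have ynz: "\<exists>i\<in>V. y i \<noteq> 0"
  proof (rule ccontr)
    assume "\<not> ?thesis"
    then have "(\<Sum>i\<in>V. y i ^ k) = 0" using k1 by simp
    then show False using yS by (simp add: Sset_def)
  qed
  have Mrho': "M \<le> \<rho>'" unfolding \<rho>'_def by (rule rho_ge[OF ku' k1 ynz ylag])
  have Qx0: "Qf \<alpha> E' k x0 = Qf \<alpha> E' k x" using Q_V[OF ku' x0V] .
  have Mge: "Qf \<alpha> E' k x0 \<le> M" unfolding M_def using ymax x0S by blast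
  show ?thesis unfolding goal_eq \<rho>_def[symmetric]
  proof (rule ccontr)
    assume "\<not> \<rho> < \<rho>'"
    then have "\<rho>' \<le> \<rho>" by simp
    then have eqM: "Qf \<alpha> E' k x0 = M" using Mrho' Mge QE QE' Qx0 by linarith
    have x0max: "\<forall>z\<in>Sset V k. Qf \<alpha> E' k z \<le> Qf \<alpha> E' k x0" using ymax eqM M_def by simp
    have "Tf \<alpha> E' k x0 u = Qf \<alpha> E' k x0 * x0 u ^ (k-1)"
      using lagrange[OF ku' k2 a1 x0S x0max] uV by blast
    moreover have "Qf \<alpha> E' k x0 = \<rho>"
      using eqM Mrho' Mge QE QE' Qx0 \<open>\<rho>' \<le> \<rho>\<close> by linarith
    moreover have "x0 u = x u" using x0V uV by simp
    moreover have "Tf \<alpha> E' k x0 u = Tf \<alpha> E' k x u" by (rule Tf_V[OF ku' x0V uV])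
    ultimately have L1: "Tf \<alpha> E' k x u = \<rho> * x u ^ (k-1)" by simp
    have L2: "Tf \<alpha> E k x u = \<rho> * x u ^ (k-1)" using Tx uV by simp
    have Eu: "{e\<in>E'. u\<in>e} = {e\<in>E. u\<in>e} \<union> B"
      unfolding E'_def A_def B_def f_def using uv by auto
    have disj: "{e\<in>E. u\<in>e} \<inter> B = {}" using BE by auto
    have fEu: "finite {e\<in>E. u\<in>e}" using K(2) by simp
    have fB: "finite B" using B_def by simp
    have cB: "card B = r" unfolding B_def using finj f_def by (simp add: card_image)
    have deg: "real (hdegree E' u) = real (hdegree E u) + real r"
      unfolding hdegree_def Eu using card_Un_disjoint[OF fEu fB disj] cB by simp
    have sm: "(\<Sum>e\<in>{e\<in>E'. u\<in>e}. prod x (e - {u})) = (\<Sum>e\<in>{e\<in>E. u\<in>e}. prod x (e - {u})) + (\<Sum>e\<in>B. prod x (e - {u}))"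
      unfolding Eu by (rule sum.union_disjoint[OF fEu fB disj])
    have Bne: "B \<noteq> {}" using r1 B_def by auto
    have Bpos: "(\<Sum>e\<in>B. prod x (e - {u})) > 0"
    proof (rule sum_pos[OF fB Bne])
      fix e assume "e \<in> B"
      then have "e \<subseteq> V" using K'(3) E'_def by auto
      then show "prod x (e - {u}) > 0" using xpos by (intro prod_pos) auto
    qed
    have xu0: "x u ^ (k-1) \<ge> 0" using xpos uV by (simp add: less_imp_le)
    have "Tf \<alpha> E' k x u = Tf \<alpha> E k x u + \<alpha> * real r * x u ^ (k-1) + (1-\<alpha>) * (\<Sum>e\<in>B. prod x (e - {u}))"
      unfolding Tf_def deg sm by (simp add: algebra_simps)
    moreover have "\<alpha> * real r * x u ^ (k-1) \<ge> 0" using a0 xu0 by simp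
    moreover have "(1-\<alpha>) * (\<Sum>e\<in>B. prod x (e - {u})) > 0" using a1 Bpos by simp
    ultimately have "Tf \<alpha> E' k x u > Tf \<alpha> E k x u" by linarith
    then show False using L1 L2 by simp
  qed
qed


end
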